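(* If a twice-marked graph $(G,u,v)$ has torsion order $2$ and every divisor on $G$ is submodular, then $(G,u,v)$ has $2$-general transmission.
   Context: A graph is a finite, connected, loopless multigraph (parallel edges allowed); its genus is $g=|E(G)|-|V(G)|+1$. A divisor is an element of the free abelian group on $V(G)$. Linear equivalence $\sim$ is generated by chip-firing (firing $w$ subtracts $\mathrm{val}(w)$ chips from $w$ and adds to each other vertex the number of edges joining it to $w$). The rank $r(D)$ is $-1$ if $D$ is not equivalent to an effective divisor, else the largest $r\ge0$ such that $D-E$ is equivalent to an effective divisor for every effective $E$ of degree $r$. $\delta(P)$ is $1$ if $P$ holds and $0$ otherwise. A twice-marked graph $(G,u,v)$ is a graph with two chosen vertices; its torsion order is the least $k\ge1$ with $ku\sim kv$. A twist of $D$ is $D+au+bv$. $\Delta(D)=r(D)-r(D-u)-r(D-v)+r(D-u-v)$. $D$ is submodular if $\Delta(D')\ge0$ for all twists $D'$. If $D$ is submodular, its transmission permutation $\tau^{u,v}_D$ is the unique bijection $\mathbb Z\to\mathbb Z$ with $\delta(\tau^{u,v}_D(b)=a)=\Delta(D+au-bv)$ for all $a,b$. An inversion of a bijection $\tau$ is a pair $(a,b)$ with $a<b$, $\tau(a)>\tau(b)$; two inversions $(a,b),(a',b')$ are $k$-equivalent if $a-a'=b-b'\equiv0\pmod k$; $\mathrm{inv}_k(\tau)$ is the number of classes. A genus-$g$ twice-marked graph has $k$-general transmission if $ku\sim kv$, every divisor is submodular, and $\mathrm{inv}_k(\tau^{u,v}_D)\le g$ for every divisor $D$. *)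

theory Defs
  imports Main "HOL-Library.Extended_Nat"
begin

text \<open>A graph is given by a vertex set V and an edge-multiplicity function m
  (m x y = number of edges joining x and y).\<close>

definition is_graph :: "'v set \<Rightarrow> ('v \<Rightarrow> 'v \<Rightarrow> nat) \<Rightarrow> bool" where
  "is_graph V m \<longleftrightarrow> finite V \<and> V \<noteq> {}
     \<and> (\<forall>x y. m x y = m y x)
     \<and> (\<forall>x. m x x = 0)
     \<and> (\<forall>x y. m x y > 0 \<longrightarrow> x \<in> V \<and> y \<in> V)
     \<and> (\<forall>x\<in>V. \<forall>y\<in>V. (x, y) \<in> {(a, b). m a b > 0}\<^sup>*)"

definition num_edges :: "'v set \<Rightarrow> ('v \<Rightarrow> 'v \<Rightarrow> nat) \<Rightarrow> nat" where
  "num_edges V m = (\<Sum>x\<in>V. \<Sum>y\<in>V. m x y) div 2"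

text \<open>genus g = |E| - |V| + 1 (nonnegative for connected graphs)\<close>
definition genus :: "'v set \<Rightarrow> ('v \<Rightarrow> 'v \<Rightarrow> nat) \<Rightarrow> nat" where
  "genus V m = num_edges V m + 1 - card V"

definition valence :: "'v set \<Rightarrow> ('v \<Rightarrow> 'v \<Rightarrow> nat) \<Rightarrow> 'v \<Rightarrow> nat" where
  "valence V m w = (\<Sum>y\<in>V. m w y)"

definition is_divisor :: "'v set \<Rightarrow> ('v \<Rightarrow> int) \<Rightarrow> bool" where
  "is_divisor V D \<longleftrightarrow> (\<forall>x. x \<notin> V \<longrightarrow> D x = 0)"

definition effective :: "('v \<Rightarrow> int) \<Rightarrow> bool" where
  "effective D \<longleftrightarrow> (\<forall>x. D x \<ge> 0)"

definition degree :: "'v set \<Rightarrow> ('v \<Rightarrow> int) \<Rightarrow> int" where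
  "degree V D = (\<Sum>x\<in>V. D x)"

definition fire :: "'v set \<Rightarrow> ('v \<Rightarrow> 'v \<Rightarrow> nat) \<Rightarrow> 'v \<Rightarrow> 'v \<Rightarrow> int" where
  "fire V m w = (\<lambda>x. if x = w then - int (valence V m w) else int (m w x))"

inductive lin_equiv :: "'v set \<Rightarrow> ('v \<Rightarrow> 'v \<Rightarrow> nat) \<Rightarrow> ('v \<Rightarrow> int) \<Rightarrow> ('v \<Rightarrow> int) \<Rightarrow> bool"
  for V m where
  refl: "lin_equiv V m D D"
| fire_fwd: "lin_equiv V m D E \<Longrightarrow> w \<in> V \<Longrightarrow> lin_equiv V m D (\<lambda>x. E x + fire V m w x)"
| fire_bwd: "lin_equiv V m D E \<Longrightarrow> w \<in> V \<Longrightarrow> lin_equiv V m D (\<lambda>x. E x - fire V m w x)"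

definition equiv_effective :: "'v set \<Rightarrow> ('v \<Rightarrow> 'v \<Rightarrow> nat) \<Rightarrow> ('v \<Rightarrow> int) \<Rightarrow> bool" where
  "equiv_effective V m D \<longleftrightarrow> (\<exists>E. effective E \<and> lin_equiv V m D E)"

definition rank :: "'v set \<Rightarrow> ('v \<Rightarrow> 'v \<Rightarrow> nat) \<Rightarrow> ('v \<Rightarrow> int) \<Rightarrow> int" where
  "rank V m D =
    (if \<not> equiv_effective V m D then -1
     else int (GREATEST r::nat. \<forall>E. is_divisor V E \<and> effective E \<and> degree V E = int r
                 \<longrightarrow> equiv_effective V m (\<lambda>x. D x - E x)))"

definition twist :: "'v \<Rightarrow> 'v \<Rightarrow> ('v \<Rightarrow> int) \<Rightarrow> int \<Rightarrow> int \<Rightarrow> 'v \<Rightarrow> int" where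
  "twist u v D a b = (\<lambda>x. D x + (if x = u then a else 0) + (if x = v then b else 0))"

definition Delta :: "'v set \<Rightarrow> ('v \<Rightarrow> 'v \<Rightarrow> nat) \<Rightarrow> 'v \<Rightarrow> 'v \<Rightarrow> ('v \<Rightarrow> int) \<Rightarrow> int" where
  "Delta V m u v D = rank V m D - rank V m (twist u v D (-1) 0) - rank V m (twist u v D 0 (-1))
      + rank V m (twist u v D (-1) (-1))"

definition submodular :: "'v set \<Rightarrow> ('v \<Rightarrow> 'v \<Rightarrow> nat) \<Rightarrow> 'v \<Rightarrow> 'v \<Rightarrow> ('v \<Rightarrow> int) \<Rightarrow> bool" where
  "submodular V m u v D \<longleftrightarrow> (\<forall>a b. Delta V m u v (twist u v D a b) \<ge> 0)"

text \<open>Transmission permutation (meaningful for submodular D).\<close>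
definition transmission_perm :: "'v set \<Rightarrow> ('v \<Rightarrow> 'v \<Rightarrow> nat) \<Rightarrow> 'v \<Rightarrow> 'v \<Rightarrow> ('v \<Rightarrow> int) \<Rightarrow> int \<Rightarrow> int" where
  "transmission_perm V m u v D = (THE \<tau>. bij \<tau> \<and>
     (\<forall>a b. (if \<tau> b = a then 1 else 0) = Delta V m u v (twist u v D a (- b))))"

definition inversions :: "(int \<Rightarrow> int) \<Rightarrow> (int \<times> int) set" where
  "inversions \<tau> = {(a, b). a < b \<and> \<tau> a > \<tau> b}"

definition k_equiv_rel :: "nat \<Rightarrow> ((int \<times> int) \<times> (int \<times> int)) set" where
  "k_equiv_rel k = {((a, b), (a', b')). a - a' = b - b' \<and> int k dvd (a - a')}"

definition inv_k :: "nat \<Rightarrow> (int \<Rightarrow> int) \<Rightarrow> enat" where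
  "inv_k k \<tau> = (let Q = inversions \<tau> // (k_equiv_rel k \<inter> (inversions \<tau> \<times> inversions \<tau>))
                in if finite Q then enat (card Q) else \<infinity>)"

definition has_torsion_order :: "'v set \<Rightarrow> ('v \<Rightarrow> 'v \<Rightarrow> nat) \<Rightarrow> 'v \<Rightarrow> 'v \<Rightarrow> nat \<Rightarrow> bool" where
  "has_torsion_order V m u v k \<longleftrightarrow> k \<ge> 1
     \<and> lin_equiv V m (twist u v (\<lambda>_. 0) (int k) 0) (twist u v (\<lambda>_. 0) 0 (int k))
     \<and> (\<forall>j. 1 \<le> j \<and> j < k \<longrightarrow>
          \<not> lin_equiv V m (twist u v (\<lambda>_. 0) (int j) 0) (twist u v (\<lambda>_. 0) 0 (int j)))"

definition k_general_transmission :: "'v set \<Rightarrow> ('v \<Rightarrow> 'v \<Rightarrow> nat) \<Rightarrow> 'v \<Rightarrow> 'v \<Rightarrow> nat \<Rightarrow> bool" where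
  "k_general_transmission V m u v k \<longleftrightarrow>
     lin_equiv V m (twist u v (\<lambda>_. 0) (int k) 0) (twist u v (\<lambda>_. 0) 0 (int k))
     \<and> (\<forall>D. is_divisor V D \<longrightarrow> submodular V m u v D)
     \<and> (\<forall>D. is_divisor V D \<longrightarrow> inv_k k (transmission_perm V m u v D) \<le> enat (genus V m))"

end

theory Submission
  imports Defs
begin


definition LL :: "'v set \<Rightarrow> ('v \<Rightarrow> 'v \<Rightarrow> nat) \<Rightarrow> ('v \<Rightarrow> int) \<Rightarrow> 'v \<Rightarrow> int" where
  "LL V m \<sigma> x = (\<Sum>w\<in>V. \<sigma> w * fire V m w x)"

lemma graph_sym: "is_graph V m \<Longrightarrow> m x y = m y x"
  unfolding is_graph_def by blast
lemma graph_loop: "is_graph V m \<Longrightarrow> m x x = 0"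
  unfolding is_graph_def by blast
lemma graph_supp: "is_graph V m \<Longrightarrow> m x y > 0 \<Longrightarrow> x \<in> V \<and> y \<in> V"
  unfolding is_graph_def by blast
lemma graph_finite: "is_graph V m \<Longrightarrow> finite V"
  unfolding is_graph_def by blast
lemma graph_supp0: "is_graph V m \<Longrightarrow> x \<notin> V \<or> y \<notin> V \<Longrightarrow> m x y = 0"
  using graph_supp by fastforce

lemma LL_formula:
  assumes G: "is_graph V m"
  shows "LL V m \<sigma> x = (\<Sum>w\<in>V. int (m x w) * (\<sigma> w - \<sigma> x))"
proof -
  have t: "\<sigma> w * fire V m w x = int (m x w) * \<sigma> w - (if w = x then \<sigma> x * int (valence V m x) else 0)" for w
    using graph_sym[OF G, of x w] graph_loop[OF G, of x] by (auto simp: fire_def)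
  have v: "(\<Sum>w\<in>V. int (m x w)) = (if x \<in> V then int (valence V m x) else 0)"
    using graph_supp0[OF G, of x] by (auto simp: valence_def)
  have "LL V m \<sigma> x = (\<Sum>w\<in>V. int (m x w) * \<sigma> w) - (\<Sum>w\<in>V. (if w = x then \<sigma> x * int (valence V m x) else 0))"
    unfolding LL_def t by (simp add: sum_subtractf)
  also have "\<dots> = (\<Sum>w\<in>V. int (m x w) * \<sigma> w) - \<sigma> x * (\<Sum>w\<in>V. int (m x w))"
    using graph_finite[OF G] v by (simp add: sum.delta')
  also have "\<dots> = (\<Sum>w\<in>V. int (m x w) * (\<sigma> w - \<sigma> x))"
    by (simp add: sum_distrib_left sum_subtractf algebra_simps)
  finally show ?thesis .
qed

lemma LL_outside: "is_graph V m \<Longrightarrow> x \<notin> V \<Longrightarrow> LL V m \<sigma> x = 0"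
  by (simp add: LL_formula graph_supp0)

lemma LL_add: "LL V m (\<lambda>w. \<sigma> w + \<rho> w) x = LL V m \<sigma> x + LL V m \<rho> x"
  unfolding LL_def by (simp add: distrib_right sum.distrib)

lemma LL_neg: "LL V m (\<lambda>w. - \<sigma> w) x = - LL V m \<sigma> x"
  unfolding LL_def by (simp add: sum_negf)

lemma LL_zero: "LL V m (\<lambda>w. 0) x = 0"
  unfolding LL_def by simp

lemma LL_single: "finite V \<Longrightarrow> w \<in> V \<Longrightarrow> LL V m (\<lambda>y. if y = w then c else 0) x = c * fire V m w x"
  unfolding LL_def
  by (subst sum.cong[OF HOL.refl, of _ _ "\<lambda>y. if y = w then c * fire V m w x else 0"]) auto

lemma lin_equiv_LL:
  assumes G: "is_graph V m"
  shows "lin_equiv V m D E \<Longrightarrow> \<exists>\<sigma>. E = (\<lambda>x. D x + LL V m \<sigma> x)"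
proof (induction rule: lin_equiv.induct)
  case refl
  then show ?case by (intro exI[of _ "\<lambda>_. 0"]) (simp add: LL_zero)
next
  case (fire_fwd D E w)
  then obtain \<sigma> where s: "E = (\<lambda>x. D x + LL V m \<sigma> x)" by blast
  show ?case
    apply (rule exI[of _ "\<lambda>y. \<sigma> y + (if y = w then 1 else 0)"])
    using fire_fwd graph_finite[OF G] by (simp add: s LL_add LL_single add.assoc)
next
  case (fire_bwd D E w)
  then obtain \<sigma> where s: "E = (\<lambda>x. D x + LL V m \<sigma> x)" by blast
  show ?case
    apply (rule exI[of _ "\<lambda>y. \<sigma> y + (if y = w then -1 else 0)"])
    using fire_bwd graph_finite[OF G] by (simp add: s LL_add LL_single algebra_simps)
qed

lemma lin_equiv_fire_mult:
  assumes "w \<in> V" "lin_equiv V m D E"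
  shows "lin_equiv V m D (\<lambda>x. E x + c * fire V m w x)"
proof -
  have pos: "lin_equiv V m D (\<lambda>x. E x + int n * fire V m w x)" for n
  proof (induction n)
    case 0 then show ?case using assms by simp
  next
    case (Suc n)
    from lin_equiv.fire_fwd[OF Suc assms(1)] show ?case by (simp add: algebra_simps)
  qed
  have neg: "lin_equiv V m D (\<lambda>x. E x - int n * fire V m w x)" for n
  proof (induction n)
    case 0 then show ?case using assms by simp
  next
    case (Suc n)
    from lin_equiv.fire_bwd[OF Suc assms(1)] show ?case by (simp add: algebra_simps)
  qed
  show ?thesis
  proof (cases "c \<ge> 0")
    case True
    then show ?thesis using pos[of "nat c"] by simp
  next
    case False
    then show ?thesis using neg[of "nat (-c)"] by simp
  qed
qed

lemma LL_lin_equiv: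
  assumes G: "is_graph V m"
  shows "lin_equiv V m D (\<lambda>x. D x + LL V m \<sigma> x)"
proof -
  have "\<And>A. finite A \<Longrightarrow> A \<subseteq> V \<Longrightarrow> lin_equiv V m D (\<lambda>x. D x + (\<Sum>w\<in>A. \<sigma> w * fire V m w x))"
  proof -
    fix A :: "'a set" assume "finite A" "A \<subseteq> V"
    then show "lin_equiv V m D (\<lambda>x. D x + (\<Sum>w\<in>A. \<sigma> w * fire V m w x))"
    proof (induction A rule: finite_induct)
      case empty then show ?case by (simp add: lin_equiv.refl)
    next
      case (insert w A)
      then have "lin_equiv V m D (\<lambda>x. D x + (\<Sum>w\<in>A. \<sigma> w * fire V m w x))" by simp
      from lin_equiv_fire_mult[OF _ this, of w "\<sigma> w"] insert show ?case
        by (simp add: algebra_simps)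
    qed
  qed
  then show ?thesis unfolding LL_def using graph_finite[OF G] by blast
qed

lemma lin_equiv_iff:
  assumes G: "is_graph V m"
  shows "lin_equiv V m D E \<longleftrightarrow> (\<exists>\<sigma>. E = (\<lambda>x. D x + LL V m \<sigma> x))"
  using lin_equiv_LL[OF G] LL_lin_equiv[OF G] by blast

lemma lin_equiv_sym:
  assumes G: "is_graph V m" and "lin_equiv V m D E"
  shows "lin_equiv V m E D"
proof -
  obtain \<sigma> where s: "E = (\<lambda>x. D x + LL V m \<sigma> x)" using assms lin_equiv_iff by blast
  show ?thesis unfolding lin_equiv_iff[OF G]
    by (rule exI[of _ "\<lambda>w. - \<sigma> w"]) (simp add: s LL_neg)
qed

lemma lin_equiv_trans:
  assumes G: "is_graph V m" and "lin_equiv V m D E" "lin_equiv V m E F"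
  shows "lin_equiv V m D F"
proof -
  obtain \<sigma> where s: "E = (\<lambda>x. D x + LL V m \<sigma> x)" using assms lin_equiv_iff by blast
  obtain \<rho> where r: "F = (\<lambda>x. E x + LL V m \<rho> x)" using assms lin_equiv_iff by blast
  show ?thesis unfolding lin_equiv_iff[OF G]
    by (rule exI[of _ "\<lambda>w. \<sigma> w + \<rho> w"]) (simp add: s r LL_add add.assoc)
qed

lemma lin_equiv_translate:
  assumes G: "is_graph V m" and "lin_equiv V m D E"
  shows "lin_equiv V m (\<lambda>x. D x + F x) (\<lambda>x. E x + F x)"
proof -
  obtain \<sigma> where s: "E = (\<lambda>x. D x + LL V m \<sigma> x)" using assms lin_equiv_iff by blast
  show ?thesis unfolding lin_equiv_iff[OF G]
    by (rule exI[of _ \<sigma>]) (simp add: s algebra_simps)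
qed

lemma lin_equiv_translate_sub:
  assumes G: "is_graph V m" and "lin_equiv V m D E"
  shows "lin_equiv V m (\<lambda>x. D x - F x) (\<lambda>x. E x - F x)"
  using lin_equiv_translate[OF G assms(2), of "\<lambda>x. - F x"] by simp

lemma degree_LL:
  assumes G: "is_graph V m"
  shows "(\<Sum>x\<in>V. LL V m \<sigma> x) = 0"
proof -
  have "(\<Sum>x\<in>V. LL V m \<sigma> x) = (\<Sum>x\<in>V. \<Sum>w\<in>V. int (m x w) * \<sigma> w) - (\<Sum>x\<in>V. \<Sum>w\<in>V. int (m x w) * \<sigma> x)"
    by (simp add: LL_formula[OF G] algebra_simps sum_subtractf)
  also have "(\<Sum>x\<in>V. \<Sum>w\<in>V. int (m x w) * \<sigma> w) = (\<Sum>w\<in>V. \<Sum>x\<in>V. int (m w x) * \<sigma> w)"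
    by (subst sum.swap) (simp add: graph_sym[OF G])
  finally show ?thesis by simp
qed

lemma lin_equiv_degree:
  assumes G: "is_graph V m" and "lin_equiv V m D E"
  shows "degree V E = degree V D"
proof -
  obtain \<sigma> where s: "E = (\<lambda>x. D x + LL V m \<sigma> x)" using assms lin_equiv_iff by blast
  show ?thesis unfolding degree_def s by (simp add: sum.distrib degree_LL[OF G])
qed

lemma lin_equiv_divisor:
  assumes G: "is_graph V m" and "lin_equiv V m D E" "is_divisor V D"
  shows "is_divisor V E"
proof -
  obtain \<sigma> where s: "E = (\<lambda>x. D x + LL V m \<sigma> x)" using assms lin_equiv_iff by blast
  show ?thesis using assms(3) unfolding is_divisor_def s by (simp add: LL_outside[OF G])
qed


locale gr =
  fixes V :: "'v set" and m :: "'v \<Rightarrow> 'v \<Rightarrow> nat"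
  assumes G: "is_graph V m"
begin

lemma fin: "finite V" using graph_finite[OF G] .
lemma msym: "m x y = m y x" using graph_sym[OF G] .
lemma mloop: "m x x = 0" using graph_loop[OF G] .
lemma msupp: "m x y > 0 \<Longrightarrow> x \<in> V \<and> y \<in> V" using graph_supp[OF G] .
lemma conn: "x \<in> V \<Longrightarrow> y \<in> V \<Longrightarrow> (x, y) \<in> {(a, b). m a b > 0}\<^sup>*"
  using G unfolding is_graph_def by blast

lemma LLf: "LL V m \<sigma> x = (\<Sum>w\<in>V. int (m x w) * (\<sigma> w - \<sigma> x))"
  using LL_formula[OF G] .

inductive grown :: "'v \<Rightarrow> 'v set \<Rightarrow> bool" for q where
  base: "grown q {q}"
| step: "grown q S \<Longrightarrow> x \<in> V \<Longrightarrow> x \<notin> S \<Longrightarrow> y \<in> S \<Longrightarrow> m x y > 0 \<Longrightarrow> grown q (insert x S)"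

lemma grown_props: "grown q S \<Longrightarrow> q \<in> V \<Longrightarrow> q \<in> S \<and> S \<subseteq> V \<and> finite S"
  by (induction rule: grown.induct) auto

lemma crossing:
  assumes "S \<subseteq> V" "q \<in> S" "z \<in> V" "z \<notin> S"
  shows "\<exists>x\<in>V - S. \<exists>y\<in>S. m x y > 0"
proof -
  have "(q, z) \<in> {(a, b). m a b > 0}\<^sup>*" using conn assms by blast
  then have "z \<in> S \<or> (\<exists>x\<in>V - S. \<exists>y\<in>S. m x y > 0)"
  proof (induction rule: rtrancl_induct)
    case base then show ?case using assms by simp
  next
    case (step y z)
    have yz: "m y z > 0" using step.hyps(2) by simp
    then have zV: "z \<in> V" using msupp by blast
    show ?case
    proof (cases "z \<in> S")
      case True then show ?thesis by simp
    next
      case False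
      show ?thesis
      proof (cases "y \<in> S")
        case True
        then show ?thesis using False zV yz msym[of y z] by auto
      next
        case False
        then show ?thesis using step.IH by blast
      qed
    qed
  qed
  then show ?thesis using assms by blast
qed

lemma grown_V:
  assumes "q \<in> V"
  shows "grown q V"
proof -
  have "grown q S \<Longrightarrow> grown q V" for S
  proof (induction "card (V - S)" arbitrary: S rule: less_induct)
    case less
    have p: "q \<in> S" "S \<subseteq> V" "finite S" using grown_props[OF less.prems assms] by auto
    show ?case
    proof (cases "S = V")
      case True then show ?thesis using less by simp
    next
      case False
      then obtain z where z: "z \<in> V" "z \<notin> S" using p by blast
      obtain x y where xy: "x \<in> V - S" "y \<in> S" "m x y > 0"
        using crossing[OF p(2) p(1) z] by blast
      have g: "grown q (insert x S)" using grown.step[OF less.prems, of x y] xy by auto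
      have ps: "V - insert x S \<subset> V - S" using xy by blast
      have "card (V - insert x S) < card (V - S)"
        using psubset_card_mono[OF _ ps] fin by simp
      from less.hyps[OF this g] show ?thesis .
    qed
  qed
  then show ?thesis using grown.base by blast
qed

lemma grown_rank:
  assumes "grown q S" "q \<in> V"
  shows "\<exists>rk::'v \<Rightarrow> nat. rk q = 0 \<and> (\<forall>x\<in>S. x \<noteq> q \<longrightarrow> (\<exists>y\<in>S. m x y > 0 \<and> rk y < rk x))
           \<and> (\<forall>x\<in>S. rk x < card S)"
  using assms
proof (induction rule: grown.induct)
  case base
  then show ?case by (intro exI[of _ "\<lambda>_. 0"]) auto
next
  case (step S x y)
  then obtain rk where rk: "rk q = 0" "\<forall>x\<in>S. x \<noteq> q \<longrightarrow> (\<exists>y\<in>S. m x y > 0 \<and> rk y < rk x)"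
    "\<forall>x\<in>S. rk x < card S" by blast
  have p: "q \<in> S" "finite S" using grown_props[OF step(1) step.prems] by auto
  show ?case
    apply (rule exI[of _ "rk(x := card S)"])
    using rk step p by (auto simp: card_insert_if)
qed

definition Hprop :: "'v set \<Rightarrow> bool" where
  "Hprop S \<longleftrightarrow> (\<forall>D. \<exists>D'. lin_equiv V m D D' \<and> (\<forall>y\<in>V - S. D' y \<ge> 0))"

lemma H_step:
  assumes "x \<in> V" "x \<notin> S" "y \<in> S" "m x y > 0" "Hprop (insert x S)"
  shows "Hprop S"
  unfolding Hprop_def
proof
  fix D
  obtain D1 where D1: "lin_equiv V m D D1" "\<forall>z\<in>V - insert x S. D1 z \<ge> 0"
    using assms(5) unfolding Hprop_def by blast
  define N where "N = \<bar>D1 x\<bar>"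
  define \<sigma> where "\<sigma> = (\<lambda>w. if w \<in> S then N else (0::int))"
  have N0: "N \<ge> 0" by (simp add: N_def)
  have nn: "LL V m \<sigma> z \<ge> 0" if "z \<notin> S" for z
    unfolding LLf using that N0 by (intro sum_nonneg) (simp add: \<sigma>_def)
  have "N \<le> int (m x y) * N" using assms(4) N0 by (simp add: mult_le_cancel_right1)
  also have "\<dots> = int (m x y) * (\<sigma> y - \<sigma> x)" using assms by (simp add: \<sigma>_def)
  also have "\<dots> \<le> LL V m \<sigma> x"
    unfolding LLf using assms N0 fin msupp[of x y]
    by (intro member_le_sum) (auto simp: \<sigma>_def)
  finally have "LL V m \<sigma> x \<ge> N" .
  then have "D1 x + LL V m \<sigma> x \<ge> 0" unfolding N_def by linarith
  moreover have "lin_equiv V m D (\<lambda>z. D1 z + LL V m \<sigma> z)"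
    using lin_equiv_trans[OF G D1(1) LL_lin_equiv[OF G]] .
  moreover have "\<forall>z\<in>V - S. D1 z + LL V m \<sigma> z \<ge> 0"
  proof
    fix z assume z: "z \<in> V - S"
    show "D1 z + LL V m \<sigma> z \<ge> 0"
    proof (cases "z = x")
      case True then show ?thesis using calculation(1) by simp
    next
      case False
      then have "D1 z \<ge> 0" using D1(2) z by blast
      moreover have "LL V m \<sigma> z \<ge> 0" using nn z by blast
      ultimately show ?thesis by simp
    qed
  qed
  ultimately show "\<exists>D'. lin_equiv V m D D' \<and> (\<forall>y\<in>V - S. D' y \<ge> 0)" by blast
qed

lemma grown_H: "grown q S \<Longrightarrow> q \<in> V \<Longrightarrow> Hprop S \<Longrightarrow> Hprop {q}"
proof (induction rule: grown.induct)
  case base then show ?case by simp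
next
  case (step S x y)
  then show ?case using H_step by blast
qed

lemma nonneg_off:
  assumes "q \<in> V"
  shows "\<exists>D'. lin_equiv V m D D' \<and> (\<forall>y\<in>V - {q}. D' y \<ge> 0)"
proof -
  have "Hprop V" unfolding Hprop_def using lin_equiv.refl by blast
  then have "Hprop {q}" using grown_H[OF grown_V[OF assms] assms] by blast
  then show ?thesis unfolding Hprop_def by blast
qed

end


context gr begin

definition Tot :: nat where "Tot = (\<Sum>x\<in>V. \<Sum>y\<in>V. m x y)"

definition legal :: "'v \<Rightarrow> ('v \<Rightarrow> int) \<Rightarrow> 'v set \<Rightarrow> bool" where
  "legal q D S \<longleftrightarrow> S \<noteq> {} \<and> S \<subseteq> V - {q} \<and> (\<forall>x\<in>S. D x \<ge> (\<Sum>y\<in>V - S. int (m x y)))"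

definition ind :: "'v set \<Rightarrow> 'v \<Rightarrow> int" where "ind S = (\<lambda>w. if w \<in> S then 1 else 0)"

lemma sum_if_notin: "finite A \<Longrightarrow> (\<Sum>w\<in>A. if w \<in> S then 0 else f w) = (\<Sum>w\<in>A - S. f w)"
  by (simp add: sum.If_cases Diff_eq)

lemma LL_ind_in:
  assumes "x \<in> S"
  shows "LL V m (ind S) x = - (\<Sum>y\<in>V - S. int (m x y))"
proof -
  have "LL V m (ind S) x = (\<Sum>w\<in>V. if w \<in> S then 0 else - int (m x w))"
    unfolding LLf using assms by (intro sum.cong) (auto simp: ind_def)
  also have "\<dots> = (\<Sum>w\<in>V - S. - int (m x w))" using fin by (rule sum_if_notin)
  finally show ?thesis by (simp add: sum_negf)
qed

lemma LL_ind_out: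
  assumes "x \<notin> S"
  shows "LL V m (ind S) x \<ge> 0"
  unfolding LLf using assms by (intro sum_nonneg) (auto simp: ind_def)

lemma Tot_nonneg_int: "(\<Sum>x\<in>V. \<Sum>y\<in>V. int (m x y)) = int Tot"
  unfolding Tot_def by simp

definition wt :: "('v \<Rightarrow> nat) \<Rightarrow> 'v \<Rightarrow> int" where
  "wt rk x = (int Tot + 1) ^ (card V - rk x)"

definition Phi :: "('v \<Rightarrow> nat) \<Rightarrow> ('v \<Rightarrow> int) \<Rightarrow> int" where
  "Phi rk D = (\<Sum>x\<in>V. D x * wt rk x)"

lemma wt_pos: "wt rk x \<ge> 1"
  unfolding wt_def by simp

lemma wt_mono: "rk x \<ge> r \<Longrightarrow> wt rk x \<le> (int Tot + 1) ^ (card V - r)"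
  unfolding wt_def by (intro power_increasing) auto

lemma term_bound:
  fixes M :: nat and K c wx :: int
  assumes K: "K \<ge> 1" and c: "c \<ge> 1" and w0: "wx \<ge> 0"
    and h1: "sx \<Longrightarrow> \<not> sw \<Longrightarrow> wx \<le> c"
    and h2: "P \<Longrightarrow> \<not> sx \<and> sw \<and> M \<ge> 1 \<and> wx \<ge> K * c"
  shows "int M * ((if sw then 1 else 0) - (if sx then 1 else 0)) * wx \<ge> (if P then K * c else 0) - int M * c"
proof -
  have Mc: "int M * c \<ge> 0" using c by simp
  show ?thesis
  proof (cases P)
    case True
    then have *: "\<not> sx" "sw" "M \<ge> 1" "wx \<ge> K * c" using h2 by auto
    have "K * c \<le> wx" using * by simp
    also have "wx \<le> int M * wx" using *(3) w0 by (simp add: mult_le_cancel_right1)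
    finally show ?thesis using * Mc True by simp
  next
    case False
    show ?thesis
    proof (cases "sx \<and> \<not> sw")
      case True
      then have "wx \<le> c" using h1 by blast
      then have "int M * wx \<le> int M * c" by (simp add: mult_left_mono)
      then show ?thesis using True False by simp
    next
      case False2: False
      have "int M * ((if sw then 1 else 0) - (if sx then 1 else 0)) * wx \<ge> 0"
        using False2 w0 by auto
      then show ?thesis using False Mc by simp
    qed
  qed
qed

lemma fire_increase:
  assumes rkb: "\<forall>x\<in>V. rk x < card V"
    and rkn: "\<forall>x\<in>V. x \<noteq> q \<longrightarrow> (\<exists>y\<in>V. m x y > 0 \<and> rk y < rk x)"
    and L: "legal q D S"
  shows "Phi rk D + 1 \<le> Phi rk (\<lambda>x. D x + LL V m (ind S) x)"
proof -
  have S: "S \<noteq> {}" "S \<subseteq> V - {q}" using L legal_def by auto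
  obtain xs where xs: "xs \<in> S" "\<forall>y. y \<in> S \<longrightarrow> rk xs \<le> rk y"
    using ex_has_least_nat[of "\<lambda>x. x \<in> S" _ rk] S(1) by blast
  have xsV: "xs \<in> V" "xs \<noteq> q" using xs S by auto
  obtain y0 where y0: "y0 \<in> V" "m xs y0 > 0" "rk y0 < rk xs" using rkn xsV by blast
  have y0S: "y0 \<notin> S" using xs y0 by force
  define r where "r = rk xs"
  define K where "K = int Tot + 1"
  define c where "c = K ^ (card V - r)"
  have K1: "K \<ge> 1" by (simp add: K_def)
  have c1: "c \<ge> 1" unfolding c_def using K1 by simp
  have rN: "r < card V" using rkb xsV r_def by auto
  have wy0: "wt rk y0 \<ge> K * c"
  proof -
    have "K * c = K ^ Suc (card V - r)" by (simp add: c_def)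
    also have "\<dots> \<le> K ^ (card V - rk y0)" using K1 y0(3) rN r_def by (intro power_increasing) auto
    finally show ?thesis by (simp add: wt_def K_def)
  qed
  have wS: "wt rk x \<le> c" if "x \<in> S" for x
    using wt_mono[of r rk x] xs that r_def by (simp add: c_def K_def)
  have m1: "m y0 xs \<ge> 1" using y0(2) msym[of y0 xs] by simp
  have tb: "(if x = y0 \<and> w = xs then K * c else 0) - int (m x w) * c
      \<le> int (m x w) * (ind S w - ind S x) * wt rk x" for x w
    unfolding ind_def
    apply (rule term_bound[OF K1 c1])
    using wt_pos[of rk x] wS y0S xs(1) wy0 m1 by auto
  have "1 \<le> c" by (rule c1)
  also have "c = K * c - int Tot * c" by (simp add: K_def algebra_simps)
  also have "K * c = (\<Sum>x\<in>V. \<Sum>w\<in>V. (if x = y0 \<and> w = xs then K * c else 0))"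
  proof -
    have "(\<Sum>x\<in>V. \<Sum>w\<in>V. (if x = y0 \<and> w = xs then K * c else 0))
        = (\<Sum>x\<in>V. if x = y0 then K * c else 0)"
      using xsV(1) fin by (intro sum.cong) (auto simp: sum.delta')
    also have "\<dots> = K * c" using y0(1) fin by (simp add: sum.delta')
    finally show ?thesis by simp
  qed
  also have "int Tot * c = (\<Sum>x\<in>V. \<Sum>w\<in>V. int (m x w) * c)"
    by (simp add: Tot_def sum_distrib_right)
  also have "(\<Sum>x\<in>V. \<Sum>w\<in>V. (if x = y0 \<and> w = xs then K * c else 0)) - (\<Sum>x\<in>V. \<Sum>w\<in>V. int (m x w) * c)
      = (\<Sum>x\<in>V. \<Sum>w\<in>V. (if x = y0 \<and> w = xs then K * c else 0) - int (m x w) * c)"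
    by (simp add: sum_subtractf)
  also have "\<dots> \<le> (\<Sum>x\<in>V. \<Sum>w\<in>V. int (m x w) * (ind S w - ind S x) * wt rk x)"
    by (intro sum_mono tb)
  also have "\<dots> = (\<Sum>x\<in>V. LL V m (ind S) x * wt rk x)"
    by (simp add: LLf sum_distrib_right)
  also have "\<dots> = Phi rk (\<lambda>x. D x + LL V m (ind S) x) - Phi rk D"
    by (simp add: Phi_def algebra_simps sum.distrib)
  finally show ?thesis by simp
qed

lemma Phi_bound:
  assumes "q \<in> V" "rk q = 0" "\<forall>y\<in>V - {q}. D y \<ge> 0"
  shows "Phi rk D \<le> (int Tot + 1) ^ card V * degree V D"
proof -
  have "D x * wt rk x \<le> D x * (int Tot + 1) ^ card V" if "x \<in> V" for x
  proof (cases "x = q")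
    case True then show ?thesis using assms by (simp add: wt_def)
  next
    case False
    then have "D x \<ge> 0" using assms that by blast
    moreover have "wt rk x \<le> (int Tot + 1) ^ card V" using wt_mono[of 0 rk x] by simp
    ultimately show ?thesis by (simp add: mult_left_mono)
  qed
  then have "Phi rk D \<le> (\<Sum>x\<in>V. D x * (int Tot + 1) ^ card V)"
    unfolding Phi_def by (rule sum_mono)
  also have "\<dots> = (int Tot + 1) ^ card V * degree V D"
    by (simp add: degree_def sum_distrib_right mult.commute)
  finally show ?thesis .
qed

lemma reduced_exists:
  assumes q: "q \<in> V"
  shows "\<exists>D'. lin_equiv V m D D' \<and> (\<forall>y\<in>V - {q}. D' y \<ge> 0) \<and> (\<forall>S. \<not> legal q D' S)"
proof -
  obtain rk where rk: "rk q = 0" "\<forall>x\<in>V. x \<noteq> q \<longrightarrow> (\<exists>y\<in>V. m x y > 0 \<and> rk y < rk x)"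
      "\<forall>x\<in>V. rk x < card V"
    using grown_rank[OF grown_V[OF q] q] by blast
  obtain D1 where D1: "lin_equiv V m D D1" "\<forall>y\<in>V - {q}. D1 y \<ge> 0" using nonneg_off[OF q] by blast
  define B where "B = (int Tot + 1) ^ card V * degree V D"
  have main: "\<forall>D'. lin_equiv V m D D' \<and> (\<forall>y\<in>V - {q}. D' y \<ge> 0) \<and> nat (B - Phi rk D') = n \<longrightarrow>
     (\<exists>D''. lin_equiv V m D D'' \<and> (\<forall>y\<in>V - {q}. D'' y \<ge> 0) \<and> (\<forall>S. \<not> legal q D'' S))" for n
  proof (induction n rule: less_induct)
    case (less n)
    show ?case
    proof (intro allI impI)
      fix D' assume a: "lin_equiv V m D D' \<and> (\<forall>y\<in>V - {q}. D' y \<ge> 0) \<and> nat (B - Phi rk D') = n"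
      show "\<exists>D''. lin_equiv V m D D'' \<and> (\<forall>y\<in>V - {q}. D'' y \<ge> 0) \<and> (\<forall>S. \<not> legal q D'' S)"
      proof (cases "\<exists>S. legal q D' S")
        case False then show ?thesis using a by blast
      next
        case True
        then obtain S where L: "legal q D' S" by blast
        define D'' where "D'' = (\<lambda>x. D' x + LL V m (ind S) x)"
        have e: "lin_equiv V m D D''"
          unfolding D''_def using lin_equiv_trans[OF G _ LL_lin_equiv[OF G]] a by blast
        have nn: "\<forall>y\<in>V - {q}. D'' y \<ge> 0"
        proof
          fix y assume y: "y \<in> V - {q}"
          show "D'' y \<ge> 0"
          proof (cases "y \<in> S")
            case True
            then show ?thesis using L LL_ind_in[OF True] unfolding D''_def legal_def by auto
          next
            case False
            then show ?thesis using LL_ind_out[OF False] a y unfolding D''_def by auto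
          qed
        qed
        have deg: "degree V D'' = degree V D" using lin_equiv_degree[OF G e] .
        have inc: "Phi rk D' + 1 \<le> Phi rk D''" unfolding D''_def using fire_increase[OF rk(3) rk(2) L] .
        have bd: "Phi rk D'' \<le> B" using Phi_bound[of q rk D''] q rk(1) nn deg B_def by simp
        have bd': "Phi rk D' \<le> B" using Phi_bound[of q rk D'] q rk(1) a lin_equiv_degree[OF G] B_def by auto
        have "nat (B - Phi rk D'') < n" using a inc bd bd' by linarith
        then show ?thesis using less.IH e nn by blast
      qed
    qed
  qed
  show ?thesis using main D1 by blast
qed

definition e2 :: "'v set \<Rightarrow> int" where
  "e2 T = (\<Sum>x\<in>T. \<Sum>y\<in>V. int (m x y)) + (\<Sum>x\<in>T. \<Sum>y\<in>V - T. int (m x y))"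

lemma e2_remove:
  assumes T: "T \<subseteq> V" and v: "v \<in> T"
  shows "e2 T = e2 (T - {v}) + 2 * (\<Sum>y\<in>V - T. int (m v y))"
proof -
  define T' where "T' = T - {v}"
  have fT: "finite T" using T fin finite_subset by blast
  have fT': "finite T'" using fT T'_def by simp
  have a1: "(\<Sum>x\<in>T. \<Sum>y\<in>V. int (m x y)) = (\<Sum>y\<in>V. int (m v y)) + (\<Sum>x\<in>T'. \<Sum>y\<in>V. int (m x y))"
    unfolding T'_def using fT v by (simp add: sum.remove)
  have a2: "(\<Sum>x\<in>T. \<Sum>y\<in>V - T. int (m x y)) = (\<Sum>y\<in>V - T. int (m v y)) + (\<Sum>x\<in>T'. \<Sum>y\<in>V - T. int (m x y))"
    unfolding T'_def using fT v by (simp add: sum.remove)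
  have VT': "V - T' = insert v (V - T)" using T v T'_def by auto
  have a3: "(\<Sum>y\<in>V - T'. int (m x y)) = int (m x v) + (\<Sum>y\<in>V - T. int (m x y))" for x
    unfolding VT' using fin v by (simp add: sum.insert)
  have a4: "(\<Sum>x\<in>T'. \<Sum>y\<in>V - T'. int (m x y)) = (\<Sum>x\<in>T'. int (m x v)) + (\<Sum>x\<in>T'. \<Sum>y\<in>V - T. int (m x y))"
    by (simp add: a3 sum.distrib)
  have a5: "(\<Sum>y\<in>V. int (m v y)) = (\<Sum>y\<in>V - T. int (m v y)) + (\<Sum>y\<in>T. int (m v y))"
    using sum_diff[OF fin T, of "\<lambda>y. int (m v y)"] by simp
  have a6: "(\<Sum>y\<in>T. int (m v y)) = (\<Sum>y\<in>T'. int (m v y))"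
    unfolding T'_def using fT v mloop[of v] by (simp add: sum.remove)
  have a7: "(\<Sum>x\<in>T'. int (m x v)) = (\<Sum>y\<in>T'. int (m v y))" using msym by simp
  show ?thesis unfolding e2_def T'_def[symmetric] using a1 a2 a4 a5 a6 a7 by linarith
qed

lemma count_bound:
  assumes nl: "\<forall>S. \<not> legal q D S"
  shows "finite T \<Longrightarrow> T \<subseteq> V - {q} \<Longrightarrow> 2 * (\<Sum>x\<in>T. D x) + 2 * int (card T) \<le> e2 T"
proof (induction "card T" arbitrary: T rule: less_induct)
  case less
  show ?case
  proof (cases "T = {}")
    case True then show ?thesis by (simp add: e2_def)
  next
    case False
    have "\<not> legal q D T" using nl by blast
    then have "\<not> (\<forall>x\<in>T. D x \<ge> (\<Sum>y\<in>V - T. int (m x y)))"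
      using False less.prems(2) unfolding legal_def by blast
    then obtain v where v: "v \<in> T" "D v < (\<Sum>y\<in>V - T. int (m v y))"
      by (auto simp: not_le)
    have c: "card (T - {v}) < card T" using card_Diff1_less[OF less.prems(1) v(1)] .
    have IH: "2 * (\<Sum>x\<in>T - {v}. D x) + 2 * int (card (T - {v})) \<le> e2 (T - {v})"
      using less.hyps[OF c] less.prems by auto
    have s: "(\<Sum>x\<in>T. D x) = D v + (\<Sum>x\<in>T - {v}. D x)" using less.prems v by (simp add: sum.remove)
    have cc: "int (card T) = int (card (T - {v})) + 1"
      using card_Suc_Diff1[OF less.prems(1) v(1)] by simp
    have e: "e2 T = e2 (T - {v}) + 2 * (\<Sum>y\<in>V - T. int (m v y))"
      using e2_remove v less.prems by blast
    show ?thesis using IH s cc e v by linarith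
  qed
qed

lemma e2_full:
  assumes q: "q \<in> V"
  shows "e2 (V - {q}) = int Tot"
proof -
  have d: "V - (V - {q}) = {q}" using q by auto
  have b1: "(\<Sum>x\<in>V - {q}. \<Sum>y\<in>V. int (m x y)) = int Tot - (\<Sum>y\<in>V. int (m q y))"
    using sum_diff1[of V "\<lambda>x. \<Sum>y\<in>V. int (m x y)" q] fin q by (simp add: Tot_def)
  have b2: "(\<Sum>x\<in>V - {q}. int (m x q)) = (\<Sum>x\<in>V. int (m x q))"
    using sum_diff1[of V "\<lambda>x. int (m x q)" q] fin q mloop[of q] by simp
  have b3: "(\<Sum>x\<in>V. int (m x q)) = (\<Sum>y\<in>V. int (m q y))" using msym by simp
  show ?thesis unfolding e2_def d using b1 b2 b3 by simp
qed

end


context gr begin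

lemma V_ne: "V \<noteq> {}" using G by (simp add: is_graph_def)

definition indeg :: "('v \<Rightarrow> nat) \<Rightarrow> 'v \<Rightarrow> int" where
  "indeg idx x = (\<Sum>y\<in>V. if idx y < idx x then int (m x y) else 0)"

lemma Tot_indeg:
  assumes inj: "inj_on idx V"
  shows "int Tot = 2 * (\<Sum>x\<in>V. indeg idx x)"
proof -
  have split: "int (m x y) = (if idx y < idx x then int (m x y) else 0) + (if idx x < idx y then int (m x y) else 0)"
    if "x \<in> V" "y \<in> V" for x y
  proof (cases "idx x = idx y")
    case True
    then have "x = y" using inj_on_eq_iff[OF inj that] by simp
    then show ?thesis using mloop by simp
  next
    case False
    then have "idx y < idx x \<and> \<not> idx x < idx y \<or> idx x < idx y \<and> \<not> idx y < idx x" by linarith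
    then show ?thesis by (elim disjE conjE) simp_all
  qed
  have "int Tot = (\<Sum>x\<in>V. \<Sum>y\<in>V. int (m x y))" by (simp add: Tot_def)
  also have "\<dots> = (\<Sum>x\<in>V. \<Sum>y\<in>V. (if idx y < idx x then int (m x y) else 0)
      + (if idx x < idx y then int (m x y) else 0))"
    by (intro sum.cong HOL.refl split)
  also have "\<dots> = (\<Sum>x\<in>V. \<Sum>y\<in>V. (if idx y < idx x then int (m x y) else 0))
      + (\<Sum>x\<in>V. \<Sum>y\<in>V. (if idx x < idx y then int (m x y) else 0))"
    by (simp add: sum.distrib)
  also have "(\<Sum>x\<in>V. \<Sum>y\<in>V. (if idx x < idx y then int (m x y) else 0))
      = (\<Sum>y\<in>V. \<Sum>x\<in>V. (if idx x < idx y then int (m x y) else 0))"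
    by (rule sum.swap)
  also have "\<dots> = (\<Sum>y\<in>V. \<Sum>x\<in>V. (if idx x < idx y then int (m y x) else 0))"
    by (intro sum.cong HOL.refl) (metis msym)
  also have "\<dots> = (\<Sum>x\<in>V. indeg idx x)" by (simp add: indeg_def)
  finally show ?thesis by (simp add: indeg_def)
qed

lemma ex_idx: "\<exists>idx::'v \<Rightarrow> nat. inj_on idx V"
  using finite_imp_inj_to_nat_seg[OF fin] by blast

lemma Tot_even: "int (num_edges V m) * 2 = int Tot"
proof -
  obtain idx :: "'v \<Rightarrow> nat" where "inj_on idx V" using ex_idx by blast
  from Tot_indeg[OF this] have "2 dvd int Tot" by simp
  then have "2 dvd Tot" by presburger
  then have "Tot div 2 * 2 = Tot" by simp
  then have "int (Tot div 2) * 2 = int Tot" by (metis of_nat_mult of_nat_numeral)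
  then show ?thesis unfolding num_edges_def Tot_def[symmetric] .
qed

lemma no_legal_zero:
  fixes rk :: "'v \<Rightarrow> nat"
  assumes rkn: "\<forall>x\<in>V. x \<noteq> q \<longrightarrow> (\<exists>y\<in>V. m x y > 0 \<and> rk y < rk x)"
  shows "\<not> legal q (\<lambda>_. 0) S"
proof
  assume L: "legal q (\<lambda>_. 0) S"
  have S: "S \<noteq> {}" "S \<subseteq> V - {q}" using L legal_def by auto
  obtain xs where xs: "xs \<in> S" "\<forall>y. y \<in> S \<longrightarrow> rk xs \<le> rk y"
    using ex_has_least_nat[of "\<lambda>x. x \<in> S" _ rk] S(1) by blast
  have xsV: "xs \<in> V" "xs \<noteq> q" using xs S by auto
  obtain y0 where y0: "y0 \<in> V" "m xs y0 > 0" "rk y0 < rk xs" using rkn xsV by blast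
  have y0S: "y0 \<in> V - S" using xs y0 by force
  have "int (m xs y0) \<le> (\<Sum>y\<in>V - S. int (m xs y))"
    using y0S fin by (intro member_le_sum) auto
  moreover have "(\<Sum>y\<in>V - S. int (m xs y)) \<le> 0" using L xs(1) unfolding legal_def by auto
  ultimately show False using y0(2) by simp
qed

lemma edges_ge: "int (card V) \<le> int (num_edges V m) + 1"
proof -
  obtain q where q: "q \<in> V" using V_ne by blast
  obtain rk where rk: "rk q = 0" "\<forall>x\<in>V. x \<noteq> q \<longrightarrow> (\<exists>y\<in>V. m x y > 0 \<and> rk y < rk x)"
      "\<forall>x\<in>V. rk x < card V"
    using grown_rank[OF grown_V[OF q] q] by blast
  have nl: "\<forall>S. \<not> legal q (\<lambda>_. 0) S" using no_legal_zero[OF rk(2)] by blast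
  have "2 * (\<Sum>x\<in>V - {q}. (0::int)) + 2 * int (card (V - {q})) \<le> e2 (V - {q})"
    using count_bound[OF nl, of "V - {q}"] fin by simp
  then have "2 * int (card (V - {q})) \<le> int Tot" using e2_full[OF q] by simp
  moreover have "int (card (V - {q})) = int (card V) - 1" using card_Suc_Diff1[OF fin q] by simp
  ultimately show ?thesis using Tot_even by linarith
qed

lemma genus_int: "int (genus V m) = int (num_edges V m) + 1 - int (card V)"
  using edges_ge unfolding genus_def by linarith

lemma K1:
  assumes D: "is_divisor V D" and deg: "degree V D \<ge> int (genus V m)"
  shows "\<exists>E. effective E \<and> lin_equiv V m D E"
proof -
  obtain q where q: "q \<in> V" using V_ne by blast
  obtain D' where D': "lin_equiv V m D D'" "\<forall>y\<in>V - {q}. D' y \<ge> 0" "\<forall>S. \<not> legal q D' S"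
    using reduced_exists[OF q] by blast
  have dv: "is_divisor V D'" using lin_equiv_divisor[OF G D'(1) D] .
  have "2 * (\<Sum>x\<in>V - {q}. D' x) + 2 * int (card (V - {q})) \<le> e2 (V - {q})"
    using count_bound[OF D'(3), of "V - {q}"] fin by simp
  then have b: "2 * (\<Sum>x\<in>V - {q}. D' x) + 2 * (int (card V) - 1) \<le> int Tot"
    using e2_full[OF q] card_Suc_Diff1[OF fin q] by simp
  have dd: "degree V D' = D' q + (\<Sum>x\<in>V - {q}. D' x)"
    unfolding degree_def using q fin by (simp add: sum.remove)
  have d2: "degree V D' = degree V D" using lin_equiv_degree[OF G D'(1)] .
  have "(\<Sum>x\<in>V - {q}. D' x) \<le> int (genus V m)"
  proof -
    define X where "X = (\<Sum>x\<in>V - {q}. D' x)"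
    have b': "2 * X + 2 * (int (card V) - 1) \<le> int Tot" using b X_def by simp
    have "2 * X + 2 * (int (card V) - 1) \<le> 2 * int (num_edges V m)"
      using b' Tot_even by (simp add: mult.commute)
    then have "X \<le> int (num_edges V m) + 1 - int (card V)" by simp
    then show ?thesis using genus_int unfolding X_def[symmetric] by simp
  qed
  then have "D' q \<ge> 0" using dd d2 deg by linarith
  then have "effective D'"
    unfolding effective_def
  proof (intro allI)
    fix x assume q0: "D' q \<ge> 0"
    show "D' x \<ge> 0"
    proof (cases "x \<in> V")
      case True
      then show ?thesis using q0 D'(2) by (cases "x = q") auto
    next
      case False
      then show ?thesis using dv unfolding is_divisor_def by simp
    qed
  qed
  then show ?thesis using D'(1) by blast
qed

definition nu :: "('v \<Rightarrow> nat) \<Rightarrow> 'v \<Rightarrow> int" where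
  "nu idx x = (if x \<in> V then indeg idx x - 1 else 0)"

lemma nu_divisor: "is_divisor V (nu idx)"
  unfolding is_divisor_def nu_def by simp

lemma nu_degree:
  assumes "inj_on idx V"
  shows "degree V (nu idx) = int (genus V m) - 1"
proof -
  have "degree V (nu idx) = (\<Sum>x\<in>V. indeg idx x) - int (card V)"
    unfolding degree_def nu_def by (simp add: sum_subtractf)
  then show ?thesis using Tot_indeg[OF assms] Tot_even genus_int by linarith
qed

lemma nu_not_eff:
  assumes inj: "inj_on idx V"
  shows "\<not> equiv_effective V m (nu idx)"
proof
  assume "equiv_effective V m (nu idx)"
  then obtain E where E: "effective E" "lin_equiv V m (nu idx) E" unfolding equiv_effective_def by blast
  then obtain \<sigma> where s: "E = (\<lambda>x. nu idx x + LL V m \<sigma> x)" using lin_equiv_iff[OF G] by blast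
  define M where "M = Max (\<sigma> ` V)"
  have Mge: "\<sigma> w \<le> M" if "w \<in> V" for w using fin that M_def by simp
  have "M \<in> \<sigma> ` V" unfolding M_def using fin V_ne by (intro Max_in) auto
  then obtain x1 where x1: "x1 \<in> V" "\<sigma> x1 = M" by blast
  obtain x0 where x0: "x0 \<in> V \<and> \<sigma> x0 = M" "\<forall>y. y \<in> V \<and> \<sigma> y = M \<longrightarrow> idx x0 \<le> idx y"
    using ex_has_least_nat[of "\<lambda>x. x \<in> V \<and> \<sigma> x = M" x1 idx] x1 by blast
  have t: "int (m x0 w) * (\<sigma> w - \<sigma> x0) \<le> (if idx w < idx x0 then - int (m x0 w) else 0)"
    if w: "w \<in> V" for w
  proof (cases "idx w < idx x0")
    case True
    then have "\<sigma> w \<noteq> M" using x0(2) w by force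
    then have "\<sigma> w - \<sigma> x0 \<le> -1" using Mge[OF w] x0(1) by simp
    then have "int (m x0 w) * (\<sigma> w - \<sigma> x0) \<le> int (m x0 w) * (-1)"
      by (intro mult_left_mono) auto
    then show ?thesis using True by simp
  next
    case False
    have "\<sigma> w - \<sigma> x0 \<le> 0" using Mge[OF w] x0(1) by simp
    then have "int (m x0 w) * (\<sigma> w - \<sigma> x0) \<le> 0" by (simp add: mult_nonneg_nonpos)
    then show ?thesis using False by simp
  qed
  have "LL V m \<sigma> x0 \<le> (\<Sum>w\<in>V. if idx w < idx x0 then - int (m x0 w) else 0)"
    unfolding LLf by (intro sum_mono t)
  also have "\<dots> = - indeg idx x0" unfolding indeg_def by (simp add: sum_negf[symmetric] if_distrib cong: if_cong)
  finally have "E x0 \<le> -1" using s x0(1) by (simp add: nu_def)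
  moreover have "E x0 \<ge> 0" using E(1) unfolding effective_def by blast
  ultimately show False by linarith
qed

lemma K2: "\<exists>\<nu>. is_divisor V \<nu> \<and> degree V \<nu> = int (genus V m) - 1 \<and> \<not> equiv_effective V m \<nu>"
proof -
  obtain idx :: "'v \<Rightarrow> nat" where "inj_on idx V" using ex_idx by blast
  then show ?thesis using nu_divisor nu_degree nu_not_eff by blast
qed

end


context gr begin

definition PP :: "('v \<Rightarrow> int) \<Rightarrow> nat \<Rightarrow> bool" where
  "PP D r \<longleftrightarrow> (\<forall>E. is_divisor V E \<and> effective E \<and> degree V E = int r
                 \<longrightarrow> equiv_effective V m (\<lambda>x. D x - E x))"

lemma rank_PP: "rank V m D = (if \<not> equiv_effective V m D then -1 else int (Greatest (PP D)))"
  unfolding rank_def PP_def by simp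

lemma eqeff_deg:
  assumes "is_divisor V F" "equiv_effective V m F"
  shows "degree V F \<ge> 0"
proof -
  obtain E where E: "effective E" "lin_equiv V m F E" using assms(2) equiv_effective_def by blast
  have "degree V E \<ge> 0" unfolding degree_def using E(1) unfolding effective_def by (simp add: sum_nonneg)
  then show ?thesis using lin_equiv_degree[OF G E(2)] by simp
qed

lemma eqeff_equiv:
  assumes "lin_equiv V m D D'"
  shows "equiv_effective V m D \<longleftrightarrow> equiv_effective V m D'"
  unfolding equiv_effective_def
  using lin_equiv_trans[OF G] lin_equiv_sym[OF G] assms by blast

definition pt :: "'v \<Rightarrow> int \<Rightarrow> 'v \<Rightarrow> int" where
  "pt q c = (\<lambda>x. if x = q then c else 0)"

lemma pt_div: "q \<in> V \<Longrightarrow> is_divisor V (pt q c)"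
  unfolding is_divisor_def pt_def by auto

lemma pt_deg: "q \<in> V \<Longrightarrow> degree V (pt q c) = c"
  unfolding degree_def pt_def using fin by (simp add: sum.delta')

lemma pt_eff: "c \<ge> 0 \<Longrightarrow> effective (pt q c)"
  unfolding effective_def pt_def by simp

lemma deg_diff: "degree V (\<lambda>x. D x - E x) = degree V D - degree V E"
  unfolding degree_def by (simp add: sum_subtractf)

lemma deg_add: "degree V (\<lambda>x. D x + E x) = degree V D + degree V E"
  unfolding degree_def by (simp add: sum.distrib)

lemma div_diff: "is_divisor V D \<Longrightarrow> is_divisor V E \<Longrightarrow> is_divisor V (\<lambda>x. D x - E x)"
  unfolding is_divisor_def by simp

lemma div_add: "is_divisor V D \<Longrightarrow> is_divisor V E \<Longrightarrow> is_divisor V (\<lambda>x. D x + E x)"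
  unfolding is_divisor_def by simp

lemma PP_eqeff:
  assumes "q \<in> V" "PP D r"
  shows "equiv_effective V m D"
proof -
  have "equiv_effective V m (\<lambda>x. D x - pt q (int r) x)"
    using assms pt_div pt_deg pt_eff unfolding PP_def by simp
  then obtain F where F: "effective F" "lin_equiv V m (\<lambda>x. D x - pt q (int r) x) F"
    unfolding equiv_effective_def by blast
  have "lin_equiv V m (\<lambda>x. (D x - pt q (int r) x) + pt q (int r) x) (\<lambda>x. F x + pt q (int r) x)"
    by (rule lin_equiv_translate[OF G F(2)])
  moreover have "effective (\<lambda>x. F x + pt q (int r) x)"
    using F(1) unfolding effective_def pt_def by simp
  ultimately show ?thesis unfolding equiv_effective_def by auto
qed

lemma PP_bound:
  assumes "is_divisor V D" "q \<in> V" "PP D r"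
  shows "int r \<le> degree V D"
proof -
  have "equiv_effective V m (\<lambda>x. D x - pt q (int r) x)"
    using assms pt_div pt_deg pt_eff unfolding PP_def by simp
  then have "degree V (\<lambda>x. D x - pt q (int r) x) \<ge> 0"
    using eqeff_deg div_diff[OF assms(1) pt_div[OF assms(2)]] by blast
  then show ?thesis using deg_diff pt_deg[OF assms(2)] by simp
qed

lemma PP_mono:
  assumes "q \<in> V" "PP D R" "r \<le> R"
  shows "PP D r"
  unfolding PP_def
proof (intro allI impI)
  fix E assume E: "is_divisor V E \<and> effective E \<and> degree V E = int r"
  define E' where "E' = (\<lambda>x. E x + pt q (int (R - r)) x)"
  have "is_divisor V E'" unfolding E'_def using div_add E pt_div assms(1) by blast
  moreover have "effective E'" using E unfolding E'_def effective_def pt_def by simp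
  moreover have "degree V E' = int R" unfolding E'_def deg_add using pt_deg[OF assms(1)] E assms(3) by simp
  ultimately have "equiv_effective V m (\<lambda>x. D x - E' x)" using assms(2) unfolding PP_def by blast
  then obtain F where F: "effective F" "lin_equiv V m (\<lambda>x. D x - E' x) F"
    unfolding equiv_effective_def by blast
  have "lin_equiv V m (\<lambda>x. (D x - E' x) + pt q (int (R - r)) x) (\<lambda>x. F x + pt q (int (R - r)) x)"
    by (rule lin_equiv_translate[OF G F(2)])
  moreover have "(\<lambda>x. (D x - E' x) + pt q (int (R - r)) x) = (\<lambda>x. D x - E x)"
    unfolding E'_def by auto
  moreover have "effective (\<lambda>x. F x + pt q (int (R - r)) x)"
    using F(1) unfolding effective_def pt_def by simp
  ultimately show "equiv_effective V m (\<lambda>x. D x - E x)" unfolding equiv_effective_def by auto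
qed

lemma PP_zero:
  assumes "equiv_effective V m D"
  shows "PP D 0"
  unfolding PP_def
proof (intro allI impI)
  fix E assume E: "is_divisor V E \<and> effective E \<and> degree V E = int 0"
  have "\<forall>x\<in>V. E x = 0"
    using E fin sum_nonneg_eq_0_iff[of V E] unfolding degree_def effective_def by auto
  then have "E = (\<lambda>_. 0)" using E unfolding is_divisor_def by auto
  then show "equiv_effective V m (\<lambda>x. D x - E x)" using assms by simp
qed

lemma rank_geI:
  assumes "is_divisor V D" "PP D r"
  shows "rank V m D \<ge> int r"
proof -
  obtain q where q: "q \<in> V" using V_ne by blast
  have e: "equiv_effective V m D" using PP_eqeff[OF q assms(2)] .
  have bnd: "\<And>y. PP D y \<Longrightarrow> y \<le> nat (degree V D)"
    using PP_bound[OF assms(1) q] by (metis nat_int nat_mono)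
  have "r \<le> Greatest (PP D)"
    by (rule Greatest_le_nat[of "PP D" r "nat (degree V D)"]) (use assms bnd in auto)
  then show ?thesis using e rank_PP by simp
qed

lemma rank_ltI:
  assumes "is_divisor V D" "\<not> PP D r"
  shows "rank V m D < int r"
proof (cases "equiv_effective V m D")
  case False then show ?thesis using rank_PP by simp
next
  case True
  obtain q where q: "q \<in> V" using V_ne by blast
  have bnd: "\<And>y. PP D y \<Longrightarrow> y \<le> nat (degree V D)"
    using PP_bound[OF assms(1) q] by (metis nat_int nat_mono)
  have "PP D (Greatest (PP D))"
    by (rule GreatestI_nat[of "PP D" 0 "nat (degree V D)"]) (use PP_zero[OF True] bnd in auto)
  then have "Greatest (PP D) < r" using PP_mono[OF q] assms(2) by (meson not_le)
  then show ?thesis using True rank_PP by simp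
qed

lemma rank_ge_m1: "rank V m D \<ge> -1"
  unfolding rank_PP by simp

lemma rank_equiv:
  assumes "lin_equiv V m D D'"
  shows "rank V m D = rank V m D'"
proof -
  have "PP D = PP D'"
  proof
    fix r
    have "lin_equiv V m (\<lambda>x. D x - E x) (\<lambda>x. D' x - E x)" for E
      using lin_equiv_translate_sub[OF G assms] .
    then show "PP D r = PP D' r" unfolding PP_def using eqeff_equiv by blast
  qed
  then show ?thesis unfolding rank_PP using eqeff_equiv[OF assms] by simp
qed

lemma rank_neg:
  assumes "is_divisor V D" "degree V D < 0"
  shows "rank V m D = -1"
  using eqeff_deg[OF assms(1)] assms(2) rank_PP by fastforce

lemma rank_large:
  assumes D: "is_divisor V D" and deg: "degree V D \<ge> 2 * int (genus V m) - 1"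
  shows "rank V m D = degree V D - int (genus V m)"
proof -
  define g where "g = int (genus V m)"
  have lower: "rank V m D \<ge> degree V D - g"
  proof (cases "degree V D \<ge> g")
    case True
    have "PP D (nat (degree V D - g))"
      unfolding PP_def
    proof (intro allI impI)
      fix E assume E: "is_divisor V E \<and> effective E \<and> degree V E = int (nat (degree V D - g))"
      have "is_divisor V (\<lambda>x. D x - E x)" using div_diff D E by blast
      moreover have "degree V (\<lambda>x. D x - E x) \<ge> int (genus V m)" using deg_diff E True g_def by simp
      ultimately show "equiv_effective V m (\<lambda>x. D x - E x)" using K1 unfolding equiv_effective_def by blast
    qed
    from rank_geI[OF D this] show ?thesis using True by simp
  next
    case False
    then show ?thesis using rank_ge_m1[of D] by linarith
  qed
  obtain \<nu> where nu: "is_divisor V \<nu>" "degree V \<nu> = g - 1" "\<not> equiv_effective V m \<nu>"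
    using K2 g_def by blast
  have notP: "\<not> PP D (nat (degree V D - g + 1))"
  proof
    assume P: "PP D (nat (degree V D - g + 1))"
    have dv: "is_divisor V (\<lambda>x. D x - \<nu> x)" using div_diff D nu(1) by blast
    have "degree V (\<lambda>x. D x - \<nu> x) \<ge> int (genus V m)" using deg_diff nu(2) deg g_def by simp
    then obtain E0 where E0: "effective E0" "lin_equiv V m (\<lambda>x. D x - \<nu> x) E0" using K1 dv by blast
    have E0d: "is_divisor V E0" using lin_equiv_divisor[OF G E0(2) dv] .
    have E0deg: "degree V E0 = int (nat (degree V D - g + 1))"
      using lin_equiv_degree[OF G E0(2)] deg_diff nu(2) deg g_def by simp
    have "equiv_effective V m (\<lambda>x. D x - E0 x)" using P E0 E0d E0deg unfolding PP_def by blast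
    moreover have "lin_equiv V m (\<lambda>x. (D x - \<nu> x) + (\<nu> x - E0 x)) (\<lambda>x. E0 x + (\<nu> x - E0 x))"
      by (rule lin_equiv_translate[OF G E0(2)])
    then have "lin_equiv V m (\<lambda>x. D x - E0 x) \<nu>" by simp
    ultimately show False using nu(3) eqeff_equiv by blast
  qed
  have "rank V m D < degree V D - g + 1" using rank_ltI[OF D notP] deg g_def by simp
  then show ?thesis using lower g_def by simp
qed

end


lemma mono_steps:
  fixes h :: "int \<Rightarrow> int"
  assumes m: "\<forall>x. h (x - 1) \<le> h x" and xy: "x \<le> y"
  shows "h x \<le> h y"
  using xy
proof (induction y rule: int_ge_induct)
  case base then show ?case by simp
next
  case (step i)
  have "h (i + 1 - 1) \<le> h (i + 1)" using m by blast
  then show ?case using step by simp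
qed

lemma jump:
  fixes h :: "int \<Rightarrow> int"
  assumes m: "\<forall>x. h (x - 1) \<le> h x" and lo: "\<forall>x. x \<le> lo \<longrightarrow> h x = 0"
    and hi: "\<forall>x. x \<ge> hi \<longrightarrow> h x = 1"
  shows "\<exists>a. h a - h (a - 1) = 1 \<and> (\<forall>a'. a' \<noteq> a \<longrightarrow> h a' - h (a' - 1) = 0)"
proof -
  have ge0: "h x \<ge> 0" for x
  proof (cases "x \<le> lo")
    case True then show ?thesis using lo by simp
  next
    case False
    then have "h lo \<le> h x" using mono_steps[OF m] by simp
    then show ?thesis using lo by simp
  qed
  have le1: "h x \<le> 1" for x
  proof (cases "x \<ge> hi")
    case True then show ?thesis using hi by simp
  next
    case False
    then have "h x \<le> h hi" using mono_steps[OF m] by simp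
    then show ?thesis using hi by simp
  qed
  define P where "P = (\<lambda>k::nat. h (lo + int k) \<ge> 1)"
  have "P (nat (hi - lo))" unfolding P_def using hi by (cases "hi \<ge> lo") auto
  then obtain k where k: "P k" "\<forall>y. P y \<longrightarrow> k \<le> y"
    using ex_has_least_nat[of P "nat (hi - lo)" "\<lambda>x. x"] by blast
  have "h lo = 0" using lo by simp
  then have k0: "k \<noteq> 0" using k(1) unfolding P_def by (cases k) auto
  define a where "a = lo + int k"
  have ha: "h a = 1" using k(1) le1[of a] unfolding P_def a_def by simp
  have "\<not> P (k - 1)"
  proof
    assume "P (k - 1)"
    then have "k \<le> k - 1" using k(2) by blast
    then show False using k0 by simp
  qed
  then have ha1: "h (a - 1) = 0" using ge0[of "a - 1"] k0 unfolding P_def a_def by (simp add: of_nat_diff add_diff_eq)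
  show ?thesis
  proof (intro exI conjI allI impI)
    show "h a - h (a - 1) = 1" using ha ha1 by simp
  next
    fix a' assume "a' \<noteq> a"
    then consider "a' > a" | "a' < a" by linarith
    then show "h a' - h (a' - 1) = 0"
    proof cases
      case 1
      then have "h a \<le> h a'" "h a \<le> h (a' - 1)" using mono_steps[OF m] by auto
      then show ?thesis using ha le1[of a'] le1[of "a' - 1"] by simp
    next
      case 2
      then have "h a' \<le> h (a - 1)" "h (a' - 1) \<le> h (a - 1)" using mono_steps[OF m] by auto
      then show ?thesis using ha1 ge0[of a'] ge0[of "a' - 1"] by simp
    qed
  qed
qed

definition Dl :: "(int \<Rightarrow> int \<Rightarrow> int) \<Rightarrow> int \<Rightarrow> int \<Rightarrow> int" where
  "Dl F a b = F a b - F (a - 1) b - F a (b + 1) + F (a - 1) (b + 1)"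

locale rankfun =
  fixes F :: "int \<Rightarrow> int \<Rightarrow> int" and n0 G :: int
  assumes A1: "\<And>a b. n0 + a - b < 0 \<Longrightarrow> F a b = -1"
    and A2: "\<And>a b. n0 + a - b \<ge> 2 * G - 1 \<Longrightarrow> F a b = n0 + a - b - G"
    and A3: "\<And>a b. Dl F a b \<ge> 0"
begin

lemma row: "\<exists>a. Dl F a b = 1 \<and> (\<forall>a'. a' \<noteq> a \<longrightarrow> Dl F a' b = 0)"
proof -
  define h where "h = (\<lambda>a. F a b - F a (b + 1))"
  have d: "Dl F a b = h a - h (a - 1)" for a unfolding Dl_def h_def by simp
  have m: "\<forall>x. h (x - 1) \<le> h x"
  proof
    fix x have "Dl F x b \<ge> 0" by (rule A3)
    then show "h (x - 1) \<le> h x" using d[of x] by simp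
  qed
  have lo: "\<forall>x. x \<le> b - n0 - 1 \<longrightarrow> h x = 0"
  proof (intro allI impI)
    fix x assume x: "x \<le> b - n0 - 1"
    have "F x b = -1" by (rule A1) (use x in linarith)
    moreover have "F x (b + 1) = -1" by (rule A1) (use x in linarith)
    ultimately show "h x = 0" unfolding h_def by simp
  qed
  have hi: "\<forall>x. x \<ge> b - n0 + 2 * G \<longrightarrow> h x = 1"
  proof (intro allI impI)
    fix x assume x: "x \<ge> b - n0 + 2 * G"
    have "F x b = n0 + x - b - G" by (rule A2) (use x in linarith)
    moreover have "F x (b + 1) = n0 + x - (b + 1) - G" by (rule A2) (use x in linarith)
    ultimately show "h x = 1" unfolding h_def by simp
  qed
  from jump[OF m lo hi] show ?thesis unfolding d .
qed

lemma col: "\<exists>b. Dl F a b = 1 \<and> (\<forall>b'. b' \<noteq> b \<longrightarrow> Dl F a b' = 0)"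
proof -
  define h where "h = (\<lambda>c. F a (- c) - F (a - 1) (- c))"
  have d: "Dl F a b = h (- b) - h (- b - 1)" for b unfolding Dl_def h_def by (simp add: algebra_simps)
  have m: "\<forall>x. h (x - 1) \<le> h x"
  proof
    fix x have "Dl F a (- x) \<ge> 0" by (rule A3)
    then show "h (x - 1) \<le> h x" using d[of "- x"] by simp
  qed
  have lo: "\<forall>x. x \<le> - n0 - a - 1 \<longrightarrow> h x = 0"
  proof (intro allI impI)
    fix x assume x: "x \<le> - n0 - a - 1"
    have "F a (- x) = -1" by (rule A1) (use x in linarith)
    moreover have "F (a - 1) (- x) = -1" by (rule A1) (use x in linarith)
    ultimately show "h x = 0" unfolding h_def by simp
  qed
  have hi: "\<forall>x. x \<ge> 2 * G - n0 - a \<longrightarrow> h x = 1"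
  proof (intro allI impI)
    fix x assume x: "x \<ge> 2 * G - n0 - a"
    have "F a (- x) = n0 + a - (- x) - G" by (rule A2) (use x in linarith)
    moreover have "F (a - 1) (- x) = n0 + (a - 1) - (- x) - G" by (rule A2) (use x in linarith)
    ultimately show "h x = 1" unfolding h_def by simp
  qed
  obtain c where c: "h c - h (c - 1) = 1" "\<forall>a'. a' \<noteq> c \<longrightarrow> h a' - h (a' - 1) = 0"
    using jump[OF m lo hi] by blast
  show ?thesis
  proof (intro exI[of _ "- c"] conjI allI impI)
    have "Dl F a (- c) = h c - h (c - 1)" using d[of "- c"] by simp
    then show "Dl F a (- c) = 1" using c(1) by simp
  next
    fix b' assume "b' \<noteq> - c"
    then have "- b' \<noteq> c" by linarith
    then have "h (- b') - h (- b' - 1) = 0" using c(2) by blast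
    then show "Dl F a b' = 0" using d[of b'] by simp
  qed
qed

lemma window: "Dl F a b \<noteq> 0 \<Longrightarrow> 0 \<le> n0 + a - b \<and> n0 + a - b \<le> 2 * G"
proof (rule ccontr)
  assume ne: "Dl F a b \<noteq> 0" and "\<not> (0 \<le> n0 + a - b \<and> n0 + a - b \<le> 2 * G)"
  then consider "n0 + a - b < 0" | "n0 + a - b > 2 * G" by linarith
  then show False
  proof cases
    case 1
    have "F a b = -1" "F (a - 1) b = -1" "F a (b + 1) = -1" "F (a - 1) (b + 1) = -1"
      by (rule A1, use 1 in linarith)+
    then show False using ne unfolding Dl_def by simp
  next
    case 2
    have "F a b = n0 + a - b - G" "F (a - 1) b = n0 + (a - 1) - b - G"
      "F a (b + 1) = n0 + a - (b + 1) - G" "F (a - 1) (b + 1) = n0 + (a - 1) - (b + 1) - G"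
      by (rule A2, use 2 in linarith)+
    then show False using ne unfolding Dl_def by simp
  qed
qed

definition tau :: "int \<Rightarrow> int" where "tau b = (THE a. Dl F a b = 1)"

lemma Dl_tau: "Dl F a b = (if tau b = a then 1 else 0)"
proof -
  obtain a0 where a0: "Dl F a0 b = 1" "\<forall>a'. a' \<noteq> a0 \<longrightarrow> Dl F a' b = 0" using row by blast
  have "tau b = a0" unfolding tau_def
  proof (rule the_equality)
    show "Dl F a0 b = 1" by (rule a0(1))
  next
    fix a assume "Dl F a b = 1"
    then show "a = a0" by (rule contrapos_pp) (use a0(2) in simp)
  qed
  then show ?thesis using a0 by auto
qed

lemma tau_bij: "bij tau"
proof (rule bijI)
  show "inj tau"
  proof (rule injI)
    fix b b' assume e: "tau b = tau b'"
    obtain b0 where b0: "Dl F (tau b) b0 = 1" "\<forall>b'. b' \<noteq> b0 \<longrightarrow> Dl F (tau b) b' = 0" using col by blast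
    have 1: "Dl F (tau b) b = 1" "Dl F (tau b) b' = 1" using Dl_tau e by auto
    have "b = b0" by (rule contrapos_pp[OF 1(1)]) (use b0(2) in simp)
    moreover have "b' = b0" by (rule contrapos_pp[OF 1(2)]) (use b0(2) in simp)
    ultimately show "b = b'" by simp
  qed
next
  show "surj tau"
  proof (rule surjI)
    fix a
    obtain b0 where b0: "Dl F a b0 = 1" using col by blast
    have "Dl F a (SOME b. Dl F a b = 1) = 1" using someI[of "\<lambda>b. Dl F a b = 1", OF b0] .
    then show "tau (SOME b. Dl F a b = 1) = a"
      using Dl_tau[of a "SOME b. Dl F a b = 1"] by (simp split: if_splits)
  qed
qed

lemma tau_unique:
  assumes "\<forall>a b. (if \<tau> b = a then 1 else 0) = Dl F a b"
  shows "\<tau> = tau"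
proof
  fix b
  have "Dl F (\<tau> b) b = 1" using assms[rule_format, of b "\<tau> b"] by simp
  then show "\<tau> b = tau b" using Dl_tau[of "\<tau> b" b] by (simp split: if_splits)
qed

lemma tau_window: "0 \<le> n0 + tau b - b \<and> n0 + tau b - b \<le> 2 * G"
  using window[of "tau b" b] Dl_tau by simp

lemma tau_period:
  assumes "\<And>a b. F (a + 2) (b + 2) = F a b"
  shows "tau (b + 2) = tau b + 2"
proof -
  have "Dl F (tau b + 2) (b + 2) = Dl F (tau b) b"
    unfolding Dl_def using assms[of "tau b" b] assms[of "tau b - 1" b] assms[of "tau b" "b + 1"]
      assms[of "tau b - 1" "b + 1"] by (simp add: algebra_simps)
  then have "Dl F (tau b + 2) (b + 2) = 1" using Dl_tau by simp
  then show ?thesis using Dl_tau[of "tau b + 2" "b + 2"] by (simp split: if_splits)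
qed

end


lemma tau_form:
  fixes \<tau> :: "int \<Rightarrow> int"
  assumes per: "\<forall>b. \<tau> (b + 2) = \<tau> b + 2"
  shows "\<tau> x = (if even x then \<tau> 0 + x else \<tau> 1 + x - 1)"
proof -
  have P: "\<tau> (2 * j) = \<tau> 0 + 2 * j \<and> \<tau> (2 * j + 1) = \<tau> 1 + 2 * j" for j :: int
  proof (induction j rule: int_induct[where k = 0])
    case base then show ?case by simp
  next
    case (step1 i)
    have "\<tau> (2 * (i + 1)) = \<tau> (2 * i) + 2" using per[rule_format, of "2 * i"] by (simp add: algebra_simps)
    moreover have "\<tau> (2 * (i + 1) + 1) = \<tau> (2 * i + 1) + 2" using per[rule_format, of "2 * i + 1"] by (simp add: algebra_simps)
    ultimately show ?case using step1 by (simp add: algebra_simps)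
  next
    case (step2 i)
    have "\<tau> (2 * i) = \<tau> (2 * (i - 1)) + 2" using per[rule_format, of "2 * (i - 1)"] by (simp add: algebra_simps)
    moreover have "\<tau> (2 * i + 1) = \<tau> (2 * (i - 1) + 1) + 2" using per[rule_format, of "2 * (i - 1) + 1"] by (simp add: algebra_simps)
    ultimately show ?case using step2 by (simp add: algebra_simps)
  qed
  show ?thesis
  proof (cases "even x")
    case True
    then obtain j where "x = 2 * j" by (rule evenE)
    then show ?thesis using P[of j] True by simp
  next
    case False
    then obtain j where "x = 2 * j + 1" by (rule oddE)
    then show ?thesis using P[of j] False by simp
  qed
qed

lemma ke_trans:
  assumes "(z, w) \<in> k_equiv_rel 2"
  shows "(z, z') \<in> k_equiv_rel 2 \<longleftrightarrow> (w, z') \<in> k_equiv_rel 2"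
  using assms by (cases z; cases w; cases z') (simp add: k_equiv_rel_def; presburger)

lemma inv_bound:
  fixes \<tau> :: "int \<Rightarrow> int" and G :: nat
  assumes bij: "bij \<tau>" and per: "\<forall>b. \<tau> (b + 2) = \<tau> b + 2"
    and win: "\<bar>\<tau> 0 - (\<tau> 1 - 1)\<bar> \<le> 2 * int G"
  shows "inv_k 2 \<tau> \<le> enat G"
proof -
  define p where "p = \<tau> 0"
  define q where "q = \<tau> 1"
  have tf: "\<tau> x = (if even x then p + x else q + x - 1)" for x
    using tau_form[OF per, of x] p_def q_def by simp
  have win': "p - q + 1 \<le> 2 * int G" "q - 1 - p \<le> 2 * int G" using win p_def q_def by (auto simp: abs_le_iff)
  define w where "w = (\<lambda>j::nat. if p > q then (0::int, 2 * int j + 1) else (1, 2 * int j + 2))"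
  define Inv where "Inv = inversions \<tau>"
  define R where "R = k_equiv_rel 2 \<inter> (Inv \<times> Inv)"
  have key: "\<exists>j<G. (z, w j) \<in> k_equiv_rel 2 \<and> w j \<in> Inv" if z: "z \<in> Inv" for z
  proof -
    obtain x y where xy: "z = (x, y)" by force
    have inv: "x < y" "\<tau> x > \<tau> y" using z xy unfolding Inv_def inversions_def by auto
    consider (eo) "even x" "odd y" | (oe) "odd x" "even y" | (ee) "even x" "even y" | (oo) "odd x" "odd y"
      by blast
    then show ?thesis
    proof cases
      case ee then show ?thesis using inv tf[of x] tf[of y] by simp
    next
      case oo then show ?thesis using inv tf[of x] tf[of y] by simp
    next
      case eo
      have c: "p + x > q + y - 1" using inv tf[of x] tf[of y] eo by simp
      define d where "d = y - x"
      have "odd d" using eo d_def by simp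
      then obtain j where j: "d = 2 * j + 1" by (rule oddE)
      have j0: "j \<ge> 0" using inv j d_def by linarith
      have pq: "p > q" using c j j0 d_def by linarith
      have jG: "j < int G" using win' c j d_def by linarith
      have wj: "w (nat j) = (0, d)" using pq j j0 unfolding w_def by simp
      have "(z, w (nat j)) \<in> k_equiv_rel 2"
        unfolding wj xy k_equiv_rel_def using eo d_def by simp
      moreover have "w (nat j) \<in> Inv"
      proof -
        have "\<tau> d = q + d - 1" using tf[of d] \<open>odd d\<close> by simp
        moreover have "\<tau> 0 = p" by (simp add: p_def)
        ultimately show ?thesis unfolding wj Inv_def inversions_def using c d_def j j0 by simp
      qed
      moreover have "nat j < G" using jG j0 by linarith
      ultimately show ?thesis by blast
    next
      case oe
      have c: "q + x - 1 > p + y" using inv tf[of x] tf[of y] oe by simp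
      define d where "d = y - x"
      have "odd d" using oe d_def by simp
      then obtain j where j: "d = 2 * j + 1" by (rule oddE)
      have j0: "j \<ge> 0" using inv j d_def by linarith
      have pq: "\<not> p > q" using c j j0 d_def by linarith
      have jG: "j < int G" using win' c j d_def by linarith
      have wj: "w (nat j) = (1, d + 1)" using pq j j0 unfolding w_def by simp
      have "(z, w (nat j)) \<in> k_equiv_rel 2"
        unfolding wj xy k_equiv_rel_def using oe d_def by simp
      moreover have "w (nat j) \<in> Inv"
      proof -
        have "even (d + 1)" using \<open>odd d\<close> by simp
        then have "\<tau> (d + 1) = p + d + 1" using tf[of "d + 1"] by simp
        moreover have "\<tau> 1 = q" by (simp add: q_def)
        ultimately show ?thesis unfolding wj Inv_def inversions_def using c d_def j j0 by simp
      qed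
      moreover have "nat j < G" using jG j0 by linarith
      ultimately show ?thesis by blast
    qed
  qed
  have sub: "Inv // R \<subseteq> (\<lambda>j. R `` {w j}) ` {..<G}"
  proof
    fix X assume "X \<in> Inv // R"
    then obtain z where z: "z \<in> Inv" "X = R `` {z}" unfolding quotient_def by blast
    obtain j where j: "j < G" "(z, w j) \<in> k_equiv_rel 2" "w j \<in> Inv" using key z by blast
    have "R `` {z} = R `` {w j}"
    proof (intro set_eqI)
      fix z'
      show "z' \<in> R `` {z} \<longleftrightarrow> z' \<in> R `` {w j}"
        using ke_trans[OF j(2), of z'] z(1) j(3) unfolding R_def by auto
    qed
    then show "X \<in> (\<lambda>j. R `` {w j}) ` {..<G}" using z j by blast
  qed
  have fin: "finite (Inv // R)" using sub by (rule finite_subset) simp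
  have "card (Inv // R) \<le> card ((\<lambda>j. R `` {w j}) ` {..<G})" using sub by (intro card_mono) auto
  also have "\<dots> \<le> G" using card_image_le[of "{..<G}" "\<lambda>j. R `` {w j}"] by simp
  finally show ?thesis unfolding inv_k_def Let_def R_def[symmetric] Inv_def[symmetric] using fin by simp
qed


lemma twist_twist: "twist u v (twist u v D a b) c d = twist u v D (a + c) (b + d)"
  by (simp add: twist_def fun_eq_iff algebra_simps)

lemma twist_div: "u \<in> V \<Longrightarrow> v \<in> V \<Longrightarrow> is_divisor V D \<Longrightarrow> is_divisor V (twist u v D a b)"
  unfolding is_divisor_def twist_def by auto

lemma twist_deg:
  assumes "finite V" "u \<in> V" "v \<in> V"
  shows "degree V (twist u v D a b) = degree V D + a + b"
proof -
  have "degree V (twist u v D a b) = degree V D + (\<Sum>x\<in>V. if x = u then a else 0) + (\<Sum>x\<in>V. if x = v then b else 0)"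
    unfolding degree_def twist_def by (simp add: sum.distrib)
  then show ?thesis using assms by (simp add: sum.delta')
qed

theorem mainTheorem12:
  fixes V :: "'v set" and m :: "'v \<Rightarrow> 'v \<Rightarrow> nat" and u v :: 'v
  assumes "is_graph V m" and "u \<in> V" and "v \<in> V"
    and "has_torsion_order V m u v 2"
    and "\<forall>D. is_divisor V D \<longrightarrow> submodular V m u v D"
  shows "k_general_transmission V m u v 2"
proof -
  interpret gr V m by (unfold_locales) (rule assms(1))
  have tor: "lin_equiv V m (twist u v (\<lambda>_. 0) 2 0) (twist u v (\<lambda>_. 0) 0 2)"
    using assms(4) unfolding has_torsion_order_def by simp
  have inv: "inv_k 2 (transmission_perm V m u v D) \<le> enat (genus V m)" if D: "is_divisor V D" for D
  proof -
    define F where "F = (\<lambda>a b. rank V m (twist u v D a (- b)))"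
    define n0 where "n0 = degree V D"
    define Gi where "Gi = int (genus V m)"
    have dv: "is_divisor V (twist u v D a (- b))" for a b by (rule twist_div[OF assms(2) assms(3) D])
    have dg: "degree V (twist u v D a (- b)) = n0 + a - b" for a b
      using twist_deg[OF fin assms(2,3)] n0_def by simp
    have Dl_eq: "Dl F a b = Delta V m u v (twist u v D a (- b))" for a b
    proof -
      have 1: "twist u v (twist u v D a (- b)) (-1) 0 = twist u v D (a - 1) (- b)"
        unfolding twist_twist by simp
      have 2: "twist u v (twist u v D a (- b)) 0 (-1) = twist u v D a (- (b + 1))"
        unfolding twist_twist by (simp add: algebra_simps)
      have 3: "twist u v (twist u v D a (- b)) (-1) (-1) = twist u v D (a - 1) (- (b + 1))"
        unfolding twist_twist by (simp add: algebra_simps)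
      show ?thesis unfolding Dl_def Delta_def F_def 1 2 3 by simp
    qed
    interpret rf: rankfun F n0 Gi
    proof
      fix a b :: int
      show "n0 + a - b < 0 \<Longrightarrow> F a b = -1" unfolding F_def using rank_neg[OF dv] dg by simp
      show "n0 + a - b \<ge> 2 * Gi - 1 \<Longrightarrow> F a b = n0 + a - b - Gi"
        unfolding F_def Gi_def using rank_large[OF dv] dg by simp
      have "submodular V m u v D" using assms(5) D by blast
      then show "Dl F a b \<ge> 0" unfolding Dl_eq submodular_def by blast
    qed
    have tp: "transmission_perm V m u v D = rf.tau"
      unfolding transmission_perm_def
    proof (rule the_equality)
      have "\<forall>a b. (if rf.tau b = a then 1 else 0) = Delta V m u v (twist u v D a (- b))"
      proof (intro allI)
        fix a b
        show "(if rf.tau b = a then 1 else 0) = Delta V m u v (twist u v D a (- b))"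
          using rf.Dl_tau[of a b] Dl_eq[of a b] by simp
      qed
      then show "bij rf.tau \<and> (\<forall>a b. (if rf.tau b = a then 1 else 0) = Delta V m u v (twist u v D a (- b)))"
        using rf.tau_bij by blast
    next
      fix \<tau> assume H: "bij \<tau> \<and> (\<forall>a b. (if \<tau> b = a then 1 else 0) = Delta V m u v (twist u v D a (- b)))"
      have "\<forall>a b. (if \<tau> b = a then 1 else 0) = Dl F a b"
      proof (intro allI)
        fix a b
        show "(if \<tau> b = a then 1 else 0) = Dl F a b" using H Dl_eq[of a b] by simp
      qed
      then show "\<tau> = rf.tau" by (rule rf.tau_unique)
    qed
    have per: "F (a + 2) (b + 2) = F a b" for a b
    proof -
      have "lin_equiv V m (\<lambda>x. twist u v (\<lambda>_. 0) 2 0 x + twist u v D a (- b - 2) x)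
                          (\<lambda>x. twist u v (\<lambda>_. 0) 0 2 x + twist u v D a (- b - 2) x)"
        by (rule lin_equiv_translate[OF G tor])
      moreover have "(\<lambda>x. twist u v (\<lambda>_. 0) 2 0 x + twist u v D a (- b - 2) x) = twist u v D (a + 2) (- (b + 2))"
        by (simp add: twist_def fun_eq_iff)
      moreover have "(\<lambda>x. twist u v (\<lambda>_. 0) 0 2 x + twist u v D a (- b - 2) x) = twist u v D a (- b)"
        by (simp add: twist_def fun_eq_iff)
      ultimately have "lin_equiv V m (twist u v D (a + 2) (- (b + 2))) (twist u v D a (- b))" by simp
      then show ?thesis unfolding F_def by (rule rank_equiv)
    qed
    have w0: "0 \<le> n0 + rf.tau 0 - 0 \<and> n0 + rf.tau 0 - 0 \<le> 2 * Gi" by (rule rf.tau_window)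
    have w1: "0 \<le> n0 + rf.tau 1 - 1 \<and> n0 + rf.tau 1 - 1 \<le> 2 * Gi" by (rule rf.tau_window)
    have win: "\<bar>rf.tau 0 - (rf.tau 1 - 1)\<bar> \<le> 2 * int (genus V m)" using w0 w1 Gi_def by linarith
    have "inv_k 2 rf.tau \<le> enat (genus V m)"
      by (rule inv_bound[OF rf.tau_bij _ win]) (use rf.tau_period[OF per] in blast)
    then show ?thesis using tp by simp
  qed
  show ?thesis unfolding k_general_transmission_def using tor assms(5) inv by simp
qed


end
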